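(* Let $\hat x\in\mathbb{R}^{n_1}$ and let (P$'$), (S1$'$), (S2), (S2$'$) be as defined in the context, and assume $d=c_y$ and that (S1$'$) and (S2$'$) are feasible. Then (P$'$) can be solved by solving (S1$'$) and (S2$'$) independently, as follows. Let $\mathfrak O$ be the optimal value of (S1$'$) if finite and $\mathfrak O=+\infty$ otherwise. Then: (S2) is unbounded if either (S2$'$) is unbounded (with an unbounded ray $(\tilde\psi,\tilde u_y)$, in which case $(\tilde\psi,\tilde u_y,0)$ is an unbounded ray of (S2)) or (S2$'$) has a finite optimum $\mathfrak O_2$ at $(\hat\psi,\hat u_y)$ with $\mathfrak O_2>\mathfrak O$ (in which case $(\hat\psi,\hat u_y,1)$ is an unbounded ray of (S2)); and if (S2$'$) has a finite optimum $\mathfrak O_2\le\mathfrak O$ at $(\hat\psi,\hat u_y)$, then $(\hat\psi,\hat u_y,0)$ is optimal for (S2) with value $\mathfrak O_2$. Consequently (P$'$) is unbounded if and only if (S1$'$) is unbounded, or (S2$'$) is unbounded, or the optimal value of (S2$'$) exceeds $\mathfrak O$; otherwise the optimal value of (P$'$) equals the optimal value of (S2$'$), attained at $(\psi,u_y,w,y,u_\psi,v)=(\hat\psi,\hat u_y,0,0,0,0)$.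
   Context: Data: $A\in\mathbb{R}^{m\times n_1}$, $B\in\mathbb{R}^{m\times n_2}$, $b\in\mathbb{R}^m$, $c_y,d\in\mathbb{R}^{n_2}$, $G_{xy}\in\mathbb{R}^{p\times n_1}$, $G_y\in\mathbb{R}^{p\times n_2}$, $h_y\in\mathbb{R}^p$, $G_{x\psi}\in\mathbb{R}^{\ell\times n_1}$, $G_\psi\in\mathbb{R}^{\ell\times m}$, $h_\psi\in\mathbb{R}^\ell$, $K_\psi\in\mathbb{R}^{q\times m}$, $K_s\in\mathbb{R}^{q\times r}$, $K_x\in\mathbb{R}^{q\times n_1}$, $k\in\mathbb{R}^q$ (the $K$'s, $k$ come from a McCormick linearization in a strong-duality reformulation of a bilevel program with lower level $\min_{y\ge0}\{d^Ty:Ax+By\ge b\}$, whose upper level additionally imposes $G_{x\psi}x+G_\psi\psi\ge h_\psi$ on the lower-level dual $\psi$). $\mathbf 1$ is the all-ones vector. (P$'$) (Benders subproblem, dual of $\min c_y^Ty$ s.t. $G_yy\ge h_y-G_{xy}\hat x$, $By\ge b-A\hat x$, $-B^T\psi\ge-d$, $-d^Ty+\psi^Tb-s^T\mathbf 1\ge 0$, $K_\psi\psi+K_ss\ge k+K_x\hat x$, $G_\psi\psi\ge h_\psi-G_{x\psi}\hat x$, $y,\psi,s\ge0$): maximize $\psi^T(b-A\hat x)+u_y^T(h_y-G_{xy}\hat x)+u_\psi^T(h_\psi-G_{x\psi}\hat x)-[d^Ty-v^T(k+K_x\hat x)]$ subject to $By-G_\psi^Tu_\psi-K_\psi^Tv\ge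 bw$, $B^T\psi+G_y^Tu_y\le dw+c_y$, $K_s^Tv\le\mathbf 1 w$, $\psi,u_y,u_\psi,w,y,v\ge0$. (S1$'$): minimize $d^Ty-u_\psi^T(h_\psi-G_{x\psi}\hat x)-v^T(k+K_x\hat x)$ subject to $By-G_\psi^Tu_\psi-K_\psi^Tv\ge b$, $K_s^Tv\le\mathbf 1$, $y,u_\psi,v\ge0$. (S2): maximize $\psi^T(b-A\hat x)+u_y^T(h_y-G_{xy}\hat x)-\mathfrak O w$ subject to $B^T\psi+G_y^Tu_y\le dw+c_y$, $\psi,u_y,w\ge0$ (with $w$ fixed at $0$ if $\mathfrak O=+\infty$). (S2$'$): (S2) with $w$ fixed at $0$, i.e., maximize $\psi^T(b-A\hat x)+u_y^T(h_y-G_{xy}\hat x)$ s.t. $B^T\psi+G_y^Tu_y\le c_y$, $\psi,u_y\ge0$. *)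

theory Defs
  imports "HOL-Analysis.Analysis"
begin

definition lp_max_unbounded :: "'a set \<Rightarrow> ('a \<Rightarrow> real) \<Rightarrow> bool" where
  "lp_max_unbounded F f \<longleftrightarrow> F \<noteq> {} \<and> (\<forall>M. \<exists>z\<in>F. f z > M)"

definition lp_min_unbounded :: "'a set \<Rightarrow> ('a \<Rightarrow> real) \<Rightarrow> bool" where
  "lp_min_unbounded F f \<longleftrightarrow> F \<noteq> {} \<and> (\<forall>M. \<exists>z\<in>F. f z < M)"

definition lp_max_opt :: "'a set \<Rightarrow> ('a \<Rightarrow> real) \<Rightarrow> 'a \<Rightarrow> bool" where
  "lp_max_opt F f z \<longleftrightarrow> z \<in> F \<and> (\<forall>z'\<in>F. f z' \<le> f z)"

definition lp_max_value :: "'a set \<Rightarrow> ('a \<Rightarrow> real) \<Rightarrow> ereal" where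
  "lp_max_value F f = (SUP z\<in>F. ereal (f z))"

definition lp_min_value :: "'a set \<Rightarrow> ('a \<Rightarrow> real) \<Rightarrow> ereal" where
  "lp_min_value F f = (INF z\<in>F. ereal (f z))"

definition lp_max_ray :: "'a::real_vector set \<Rightarrow> ('a \<Rightarrow> real) \<Rightarrow> 'a \<Rightarrow> bool" where
  "lp_max_ray F f r \<longleftrightarrow> F \<noteq> {} \<and> (\<forall>z\<in>F. \<forall>t::real. t \<ge> 0 \<longrightarrow> z + t *\<^sub>R r \<in> F) \<and> f r > 0"

definition S1_feas ::
  "real^'n2^'m \<Rightarrow> real^'m^'l \<Rightarrow> real^'m^'q \<Rightarrow> real^'r^'q \<Rightarrow> real^'m
   \<Rightarrow> ((real^'n2) \<times> (real^'l) \<times> (real^'q)) set" where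
  "S1_feas B G\<psi> K\<psi> Ks b = {(y, u\<psi>, v).
     B *v y - transpose G\<psi> *v u\<psi> - transpose K\<psi> *v v \<ge> b \<and>
     transpose Ks *v v \<le> vec 1 \<and> y \<ge> 0 \<and> u\<psi> \<ge> 0 \<and> v \<ge> 0}"

definition S1_obj ::
  "real^'n2 \<Rightarrow> real^'l \<Rightarrow> real^'n1^'l \<Rightarrow> real^'q \<Rightarrow> real^'n1^'q \<Rightarrow> real^'n1
   \<Rightarrow> (real^'n2) \<times> (real^'l) \<times> (real^'q) \<Rightarrow> real" where
  "S1_obj d h\<psi> Gx\<psi> k Kx xh = (\<lambda>(y, u\<psi>, v).
     d \<bullet> y - u\<psi> \<bullet> (h\<psi> - Gx\<psi> *v xh) - v \<bullet> (k + Kx *v xh))"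

definition frakO :: "'a set \<Rightarrow> ('a \<Rightarrow> real) \<Rightarrow> ereal" where
  "frakO F f = (if lp_min_value F f = -\<infinity> then \<infinity> else lp_min_value F f)"

definition S2_feas ::
  "real^'n2^'m \<Rightarrow> real^'n2^'p \<Rightarrow> real^'n2 \<Rightarrow> real^'n2 \<Rightarrow> ereal
   \<Rightarrow> ((real^'m) \<times> (real^'p) \<times> real) set" where
  "S2_feas B Gy d cy Oc = {(\<psi>, uy, w).
     transpose B *v \<psi> + transpose Gy *v uy \<le> w *\<^sub>R d + cy \<and>
     \<psi> \<ge> 0 \<and> uy \<ge> 0 \<and> w \<ge> 0 \<and> (Oc = \<infinity> \<longrightarrow> w = 0)}"

text \<open>Objective of (S2); when Oc = +infinity the term Oc*w is absent (w = 0).\<close>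
definition S2_obj ::
  "real^'m \<Rightarrow> real^'n1^'m \<Rightarrow> real^'p \<Rightarrow> real^'n1^'p \<Rightarrow> real^'n1 \<Rightarrow> ereal
   \<Rightarrow> (real^'m) \<times> (real^'p) \<times> real \<Rightarrow> real" where
  "S2_obj b A hy Gxy xh Oc = (\<lambda>(\<psi>, uy, w).
     \<psi> \<bullet> (b - A *v xh) + uy \<bullet> (hy - Gxy *v xh)
     - (if Oc = \<infinity> then 0 else real_of_ereal Oc * w))"

definition S2'_feas ::
  "real^'n2^'m \<Rightarrow> real^'n2^'p \<Rightarrow> real^'n2 \<Rightarrow> ((real^'m) \<times> (real^'p)) set" where
  "S2'_feas B Gy cy = {(\<psi>, uy).
     transpose B *v \<psi> + transpose Gy *v uy \<le> cy \<and> \<psi> \<ge> 0 \<and> uy \<ge> 0}"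

definition S2'_obj ::
  "real^'m \<Rightarrow> real^'n1^'m \<Rightarrow> real^'p \<Rightarrow> real^'n1^'p \<Rightarrow> real^'n1
   \<Rightarrow> (real^'m) \<times> (real^'p) \<Rightarrow> real" where
  "S2'_obj b A hy Gxy xh = (\<lambda>(\<psi>, uy). \<psi> \<bullet> (b - A *v xh) + uy \<bullet> (hy - Gxy *v xh))"

definition P_feas ::
  "real^'n2^'m \<Rightarrow> real^'m^'l \<Rightarrow> real^'m^'q \<Rightarrow> real^'r^'q \<Rightarrow> real^'n2^'p
   \<Rightarrow> real^'m \<Rightarrow> real^'n2 \<Rightarrow> real^'n2
   \<Rightarrow> ((real^'m) \<times> (real^'p) \<times> real \<times> (real^'n2) \<times> (real^'l) \<times> (real^'q)) set" where
  "P_feas B G\<psi> K\<psi> Ks Gy b d cy = {(\<psi>, uy, w, y, u\<psi>, v).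
     B *v y - transpose G\<psi> *v u\<psi> - transpose K\<psi> *v v \<ge> w *\<^sub>R b \<and>
     transpose B *v \<psi> + transpose Gy *v uy \<le> w *\<^sub>R d + cy \<and>
     transpose Ks *v v \<le> w *\<^sub>R vec 1 \<and>
     \<psi> \<ge> 0 \<and> uy \<ge> 0 \<and> u\<psi> \<ge> 0 \<and> w \<ge> 0 \<and> y \<ge> 0 \<and> v \<ge> 0}"

definition P_obj ::
  "real^'m \<Rightarrow> real^'n1^'m \<Rightarrow> real^'p \<Rightarrow> real^'n1^'p \<Rightarrow> real^'l \<Rightarrow> real^'n1^'l
   \<Rightarrow> real^'n2 \<Rightarrow> real^'q \<Rightarrow> real^'n1^'q \<Rightarrow> real^'n1
   \<Rightarrow> (real^'m) \<times> (real^'p) \<times> real \<times> (real^'n2) \<times> (real^'l) \<times> (real^'q) \<Rightarrow> real" where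
  "P_obj b A hy Gxy h\<psi> Gx\<psi> d k Kx xh = (\<lambda>(\<psi>, uy, w, y, u\<psi>, v).
     \<psi> \<bullet> (b - A *v xh) + uy \<bullet> (hy - Gxy *v xh) + u\<psi> \<bullet> (h\<psi> - Gx\<psi> *v xh)
     - (d \<bullet> y - v \<bullet> (k + Kx *v xh)))"

end

theory Submission imports Defs begin

lemma mv_add: "(A::real^'n^'m) *v (x + y) = A *v x + A *v y"
  by (simp add: matrix_vector_mult_def vec_eq_iff sum.distrib algebra_simps)

lemma mv_scale: "(A::real^'n^'m) *v (c *\<^sub>R x) = c *\<^sub>R (A *v x)"
  by (simp add: matrix_vector_mult_def vec_eq_iff sum_distrib_left algebra_simps)

lemma vle_add: "(x::real^'n) \<le> y \<Longrightarrow> u \<le> w \<Longrightarrow> x + u \<le> y + w"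
  by (simp add: less_eq_vec_def add_mono)

lemma vle_scale: "(x::real^'n) \<le> y \<Longrightarrow> 0 \<le> c \<Longrightarrow> c *\<^sub>R x \<le> c *\<^sub>R y"
  by (simp add: less_eq_vec_def mult_left_mono)

lemma ray_le_real:
  fixes a c e :: real
  assumes "\<forall>t\<ge>0. a + t * c \<le> e" shows "c \<le> 0"
proof (rule ccontr)
  assume "\<not> c \<le> 0"
  hence c: "c > 0" by simp
  define t where "t = (\<bar>e - a\<bar> + 1) / c"
  have "t \<ge> 0" using c by (simp add: t_def)
  hence "a + t * c \<le> e" using assms by blast
  moreover have "t * c = \<bar>e - a\<bar> + 1" using c by (simp add: t_def)
  ultimately show False by linarith
qed

lemma ray_le_vec:
  fixes a c e :: "real^'n"
  assumes "\<forall>t\<ge>0. a + t *\<^sub>R c \<le> e" shows "c \<le> 0"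
  unfolding less_eq_vec_def
proof
  fix i
  have "\<forall>t\<ge>0. a$i + t * c$i \<le> e$i" using assms by (simp add: less_eq_vec_def)
  thus "c$i \<le> 0$i" using ray_le_real by simp
qed

lemma ray_ge_vec:
  fixes a c :: "real^'n"
  assumes "\<forall>t\<ge>0. 0 \<le> a + t *\<^sub>R c" shows "0 \<le> c"
  unfolding less_eq_vec_def
proof
  fix i
  have "\<forall>t\<ge>0. (- a$i) + t * (- c$i) \<le> 0"
  proof (intro allI impI)
    fix t :: real assume "t \<ge> 0"
    hence "0 \<le> (a + t *\<^sub>R c)$i" using assms by (simp add: less_eq_vec_def)
    thus "(- a$i) + t * (- c$i) \<le> 0" by simp
  qed
  hence "- c$i \<le> 0" using ray_le_real by blast
  thus "0$i \<le> c$i" by simp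
qed

lemma ray_unb:
  assumes "lp_max_ray F f r" "\<And>z t. f (z + t *\<^sub>R r) = f z + t * f r"
  shows "lp_max_unbounded F f"
proof -
  from assms(1) have ne: "F \<noteq> {}" and cl: "\<forall>z\<in>F. \<forall>t::real. t \<ge> 0 \<longrightarrow> z + t *\<^sub>R r \<in> F"
    and pos: "f r > 0" by (auto simp: lp_max_ray_def)
  obtain z0 where z0: "z0 \<in> F" using ne by blast
  show ?thesis unfolding lp_max_unbounded_def
  proof (intro conjI allI ne)
    fix M
    define t where "t = (\<bar>M - f z0\<bar> + 1) / f r"
    have t0: "t \<ge> 0" using pos by (simp add: t_def)
    have "t * f r = \<bar>M - f z0\<bar> + 1" using pos by (simp add: t_def)
    hence "f (z0 + t *\<^sub>R r) > M" using assms(2) by simp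
    moreover have "z0 + t *\<^sub>R r \<in> F" using cl z0 t0 by blast
    ultimately show "\<exists>z\<in>F. f z > M" by blast
  qed
qed

lemma opt_value:
  assumes "lp_max_opt F f z" shows "lp_max_value F f = ereal (f z)"
proof -
  have z: "z \<in> F" and le: "\<forall>z'\<in>F. f z' \<le> f z" using assms by (auto simp: lp_max_opt_def)
  have "(SUP z\<in>F. ereal (f z)) \<le> ereal (f z)" using le by (intro SUP_least) simp
  moreover have "ereal (f z) \<le> (SUP z\<in>F. ereal (f z))" using z by (rule SUP_upper)
  ultimately show ?thesis unfolding lp_max_value_def by (rule antisym)
qed

lemma vle_comb: "(x::real^'n) \<le> e \<Longrightarrow> y \<le> f \<Longrightarrow> 0 \<le> t \<Longrightarrow> x + t *\<^sub>R y \<le> e + t *\<^sub>R f"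
  by (simp add: less_eq_vec_def add_mono mult_left_mono)

lemma vnn_comb: "0 \<le> (x::real^'n) \<Longrightarrow> 0 \<le> y \<Longrightarrow> 0 \<le> t \<Longrightarrow> 0 \<le> x + t *\<^sub>R y"
  by (simp add: less_eq_vec_def)

lemma vnn_scale: "0 \<le> (x::real^'n) \<Longrightarrow> 0 \<le> t \<Longrightarrow> 0 \<le> t *\<^sub>R x"
  by (simp add: less_eq_vec_def)

theorem corollary2:
  fixes A :: "real^'n1^'m" and B :: "real^'n2^'m" and b :: "real^'m"
    and cy d :: "real^'n2"
    and Gxy :: "real^'n1^'p" and Gy :: "real^'n2^'p" and hy :: "real^'p"
    and Gx\<psi> :: "real^'n1^'l" and G\<psi> :: "real^'m^'l" and h\<psi> :: "real^'l"
    and K\<psi> :: "real^'m^'q" and Ks :: "real^'r^'q" and Kx :: "real^'n1^'q" and k :: "real^'q"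
    and xh :: "real^'n1"
  defines "F1 \<equiv> S1_feas B G\<psi> K\<psi> Ks b"
    and "f1 \<equiv> S1_obj d h\<psi> Gx\<psi> k Kx xh"
    and "Oc \<equiv> frakO (S1_feas B G\<psi> K\<psi> Ks b) (S1_obj d h\<psi> Gx\<psi> k Kx xh)"
    and "F2 \<equiv> S2_feas B Gy d cy (frakO (S1_feas B G\<psi> K\<psi> Ks b) (S1_obj d h\<psi> Gx\<psi> k Kx xh))"
    and "f2 \<equiv> S2_obj b A hy Gxy xh (frakO (S1_feas B G\<psi> K\<psi> Ks b) (S1_obj d h\<psi> Gx\<psi> k Kx xh))"
    and "F2' \<equiv> S2'_feas B Gy cy"
    and "f2' \<equiv> S2'_obj b A hy Gxy xh"
    and "FP \<equiv> P_feas B G\<psi> K\<psi> Ks Gy b d cy"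
    and "fP \<equiv> P_obj b A hy Gxy h\<psi> Gx\<psi> d k Kx xh"
  assumes dc: "d = cy"
    and feas1: "F1 \<noteq> {}"
    and feas2': "F2' \<noteq> {}"
  shows
    "(lp_max_unbounded F2' f2' \<longrightarrow> lp_max_unbounded F2 f2)
     \<and> (\<forall>\<psi> uy. lp_max_ray F2' f2' (\<psi>, uy) \<longrightarrow> lp_max_ray F2 f2 (\<psi>, uy, 0))
     \<and> (\<forall>\<psi> uy. lp_max_opt F2' f2' (\<psi>, uy) \<and> ereal (f2' (\<psi>, uy)) > Oc \<longrightarrow>
          lp_max_unbounded F2 f2 \<and> lp_max_ray F2 f2 (\<psi>, uy, 1))
     \<and> (\<forall>\<psi> uy. lp_max_opt F2' f2' (\<psi>, uy) \<and> ereal (f2' (\<psi>, uy)) \<le> Oc \<longrightarrow>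
          lp_max_opt F2 f2 (\<psi>, uy, 0) \<and> f2 (\<psi>, uy, 0) = f2' (\<psi>, uy))
     \<and> (lp_max_unbounded FP fP \<longleftrightarrow>
          lp_min_unbounded F1 f1 \<or> lp_max_unbounded F2' f2' \<or> lp_max_value F2' f2' > Oc)
     \<and> (\<forall>\<psi> uy. \<not> lp_min_unbounded F1 f1 \<and> lp_max_opt F2' f2' (\<psi>, uy)
            \<and> ereal (f2' (\<psi>, uy)) \<le> Oc \<longrightarrow>
          lp_max_opt FP fP (\<psi>, uy, 0, 0, 0, 0) \<and> fP (\<psi>, uy, 0, 0, 0, 0) = f2' (\<psi>, uy)
          \<and> lp_max_value FP fP = lp_max_value F2' f2')"

proof -
  let ?L = "\<lambda>\<psi> uy. transpose B *v \<psi> + transpose Gy *v uy"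
  let ?R = "\<lambda>y u\<psi> v. B *v y - transpose G\<psi> *v u\<psi> - transpose K\<psi> *v v"
  have F2'_iff: "\<And>\<psi> uy. (\<psi>, uy) \<in> F2' \<longleftrightarrow> ?L \<psi> uy \<le> cy \<and> \<psi> \<ge> 0 \<and> uy \<ge> 0"
    by (simp add: F2'_def S2'_feas_def)
  have F1_iff: "\<And>y u\<psi> v. (y, u\<psi>, v) \<in> F1 \<longleftrightarrow> ?R y u\<psi> v \<ge> b \<and> transpose Ks *v v \<le> vec 1
      \<and> y \<ge> 0 \<and> u\<psi> \<ge> 0 \<and> v \<ge> 0"
    by (simp add: F1_def S1_feas_def)
  have F2_iff: "\<And>\<psi> uy w. (\<psi>, uy, w) \<in> F2 \<longleftrightarrow> ?L \<psi> uy \<le> (w + 1) *\<^sub>R cy \<and> \<psi> \<ge> 0 \<and> uy \<ge> 0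
      \<and> w \<ge> 0 \<and> (Oc = \<infinity> \<longrightarrow> w = 0)"
    unfolding F2_def Oc_def[symmetric] by (simp add: S2_feas_def dc scaleR_left_distrib)
  have FP_iff: "\<And>\<psi> uy w y u\<psi> v. (\<psi>, uy, w, y, u\<psi>, v) \<in> FP \<longleftrightarrow>
      ?R y u\<psi> v \<ge> w *\<^sub>R b \<and> ?L \<psi> uy \<le> (w + 1) *\<^sub>R cy \<and> transpose Ks *v v \<le> w *\<^sub>R vec 1
      \<and> \<psi> \<ge> 0 \<and> uy \<ge> 0 \<and> u\<psi> \<ge> 0 \<and> w \<ge> 0 \<and> y \<ge> 0 \<and> v \<ge> 0"
    by (auto simp add: FP_def P_feas_def dc scaleR_left_distrib)
  have f2_eq: "\<And>\<psi> uy w. f2 (\<psi>, uy, w) = f2' (\<psi>, uy) - (if Oc = \<infinity> then 0 else real_of_ereal Oc * w)"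
    by (simp add: f2_def f2'_def S2_obj_def S2'_obj_def Oc_def)
  have fP_eq: "\<And>\<psi> uy w y u\<psi> v. fP (\<psi>, uy, w, y, u\<psi>, v) = f2' (\<psi>, uy) - f1 (y, u\<psi>, v)"
    by (simp add: fP_def f2'_def f1_def P_obj_def S2'_obj_def S1_obj_def)
  have f2'_add: "\<And>a b c e. f2' (a + c, b + e) = f2' (a, b) + f2' (c, e)"
    by (simp add: f2'_def S2'_obj_def inner_add_left)
  have f2'_scale: "\<And>a b t. f2' (t *\<^sub>R a, t *\<^sub>R b) = t * f2' (a, b)"
    by (simp add: f2'_def S2'_obj_def algebra_simps)
  have f1_add: "\<And>a b c a' b' c'. f1 (a + a', b + b', c + c') = f1 (a, b, c) + f1 (a', b', c')"
    by (simp add: f1_def S1_obj_def inner_add_left inner_add_right)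
  have f1_scale: "\<And>a b c t. f1 (t *\<^sub>R a, t *\<^sub>R b, t *\<^sub>R c) = t * f1 (a, b, c)"
    by (simp add: f1_def S1_obj_def algebra_simps)
  have L_lin: "\<And>a b c e t. ?L (a + t *\<^sub>R c) (b + t *\<^sub>R e) = ?L a b + t *\<^sub>R ?L c e"
    by (simp add: mv_add mv_scale algebra_simps)
  have L_scale: "\<And>a b t. ?L (t *\<^sub>R a) (t *\<^sub>R b) = t *\<^sub>R ?L a b"
    by (simp add: mv_add mv_scale algebra_simps)
  have R_lin: "\<And>a b c a' b' c' t. ?R (a + t *\<^sub>R a') (b + t *\<^sub>R b') (c + t *\<^sub>R c') = ?R a b c + t *\<^sub>R ?R a' b' c'"
    by (simp add: mv_add mv_scale algebra_simps)
  have R_scale: "\<And>a b c t. ?R (t *\<^sub>R a) (t *\<^sub>R b) (t *\<^sub>R c) = t *\<^sub>R ?R a b c"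
    by (simp add: mv_add mv_scale algebra_simps)

  have Oc_eq: "Oc = frakO F1 f1" by (simp add: Oc_def F1_def f1_def)
  obtain s0 where s0: "s0 \<in> F1" using feas1 by blast
  have Oc_fin: "\<exists>c. Oc = ereal c \<and> (\<forall>s\<in>F1. c \<le> f1 s) \<and> (\<forall>e>c. \<exists>s\<in>F1. f1 s < e)"
    if nu: "\<not> lp_min_unbounded F1 f1"
  proof -
    let ?I = "INF s\<in>F1. ereal (f1 s)"
    obtain M where M: "\<forall>s\<in>F1. M \<le> f1 s" using nu feas1 unfolding lp_min_unbounded_def
      by (meson not_less)
    have "ereal M \<le> ?I" using M by (intro INF_greatest) simp
    moreover have "?I \<le> ereal (f1 s0)" using s0 by (rule INF_lower)
    ultimately obtain c where c: "?I = ereal c" by (cases ?I) auto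
    have "Oc = ereal c" using c by (simp add: Oc_eq frakO_def lp_min_value_def)
    moreover have "\<forall>s\<in>F1. c \<le> f1 s"
    proof
      fix s assume "s \<in> F1"
      hence "?I \<le> ereal (f1 s)" by (rule INF_lower)
      thus "c \<le> f1 s" using c by simp
    qed
    moreover have "\<forall>e>c. \<exists>s\<in>F1. f1 s < e"
    proof (intro allI impI)
      fix e assume "e > c"
      hence "?I < ereal e" using c by simp
      then obtain s where "s \<in> F1" "ereal (f1 s) < ereal e" by (auto simp: INF_less_iff)
      thus "\<exists>s\<in>F1. f1 s < e" by auto
    qed
    ultimately show ?thesis by blast
  qed
  have Oc_inf: "Oc = \<infinity>" if un: "lp_min_unbounded F1 f1"
  proof -
    let ?I = "INF s\<in>F1. ereal (f1 s)"
    have "?I = -\<infinity>"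
    proof (rule ccontr)
      assume ne: "?I \<noteq> -\<infinity>"
      have "?I \<le> ereal (f1 s0)" using s0 by (rule INF_lower)
      with ne obtain c where c: "?I = ereal c" by (cases ?I) auto
      from un obtain s where s: "s \<in> F1" "f1 s < c" unfolding lp_min_unbounded_def by blast
      have "?I \<le> ereal (f1 s)" using s(1) by (rule INF_lower)
      with c s(2) show False by simp
    qed
    thus ?thesis by (simp add: Oc_eq frakO_def lp_min_value_def)
  qed
  have nu_of: "\<not> lp_min_unbounded F1 f1" if "Oc \<noteq> \<infinity>" using Oc_inf that by blast
  have emb: "\<And>a b. (a, b) \<in> F2' \<Longrightarrow> (a, b, 0) \<in> F2" by (simp add: F2_iff F2'_iff)
  have f2_0: "\<And>a b. f2 (a, b, 0) = f2' (a, b)" by (simp add: f2_eq)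
  have f1_0: "f1 (0, 0, 0) = 0" by (simp add: f1_def S1_obj_def)
  have sc2: "f2' (a, b) \<le> (w + 1) * V"
    if h: "?L a b \<le> (w + 1) *\<^sub>R cy" "0 \<le> a" "0 \<le> b" "0 \<le> w" "\<forall>z\<in>F2'. f2' z \<le> V" for a b w V
  proof -
    define s where "s = 1 / (w + 1)"
    have s0': "s \<ge> 0" using h(4) by (simp add: s_def)
    have sw: "s * (w + 1) = 1" using h(4) by (simp add: s_def)
    have "?L (s *\<^sub>R a) (s *\<^sub>R b) = s *\<^sub>R ?L a b" by (rule L_scale)
    also have "\<dots> \<le> s *\<^sub>R ((w + 1) *\<^sub>R cy)" using h(1) s0' by (rule vle_scale)
    also have "\<dots> = cy" using sw by simp
    finally have "(s *\<^sub>R a, s *\<^sub>R b) \<in> F2'" using h(2,3) s0' by (simp add: F2'_iff vnn_scale)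
    hence "s * f2' (a, b) \<le> V" using h(5) f2'_scale by metis
    hence "(w + 1) * (s * f2' (a, b)) \<le> (w + 1) * V" using h(4) by (intro mult_left_mono) auto
    thus ?thesis using sw by (simp add: mult.assoc[symmetric] mult.commute[of "w+1" s])
  qed
  have sc1: "w * c \<le> f1 (y, u, v)"
    if h: "w *\<^sub>R b \<le> ?R y u v" "transpose Ks *v v \<le> w *\<^sub>R vec 1" "0 \<le> y" "0 \<le> u" "0 \<le> v" "0 \<le> w"
      "\<forall>s\<in>F1. c \<le> f1 s" for y u v w c
  proof (cases "w = 0")
    case False
    hence wp: "w > 0" using h(6) by simp
    define s where "s = 1 / w"
    have s0': "s \<ge> 0" using wp by (simp add: s_def)
    have sw: "s * w = 1" using wp by (simp add: s_def)
    have "s *\<^sub>R (w *\<^sub>R b) \<le> s *\<^sub>R ?R y u v" using h(1) s0' by (rule vle_scale)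
    hence r1: "b \<le> ?R (s *\<^sub>R y) (s *\<^sub>R u) (s *\<^sub>R v)" using sw by (simp only: R_scale) simp
    have "s *\<^sub>R (transpose Ks *v v) \<le> s *\<^sub>R (w *\<^sub>R vec 1)" using h(2) s0' by (rule vle_scale)
    hence r2: "transpose Ks *v (s *\<^sub>R v) \<le> vec 1" using sw by (simp add: mv_scale del: transpose_matrix_vector)
    have "(s *\<^sub>R y, s *\<^sub>R u, s *\<^sub>R v) \<in> F1" using r1 r2 h(3,4,5) s0' by (simp add: F1_iff vnn_scale)
    hence "c \<le> s * f1 (y, u, v)" using h(7) f1_scale by metis
    hence "w * c \<le> w * (s * f1 (y, u, v))" using h(6) by (intro mult_left_mono) auto
    thus ?thesis using sw by (simp add: mult.assoc[symmetric] mult.commute[of w s])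
  next
    case True
    obtain y0 u0 v0 where s0e: "s0 = (y0, u0, v0)" by (cases s0) auto
    have in0: "(y0, u0, v0) \<in> F1" using s0 s0e by simp
    have "\<forall>t\<ge>0. - f1 (y0, u0, v0) + t * (- f1 (y, u, v)) \<le> - c"
    proof (intro allI impI)
      fix t :: real assume t: "t \<ge> 0"
      have Rr: "0 \<le> ?R y u v" using h(1) True by simp
      have Kr: "transpose Ks *v v \<le> 0" using h(2) True by simp
      have "b + t *\<^sub>R 0 \<le> ?R y0 u0 v0 + t *\<^sub>R ?R y u v" using in0 Rr t
        by (intro vle_comb) (auto simp: F1_iff)
      hence r1: "b \<le> ?R (y0 + t *\<^sub>R y) (u0 + t *\<^sub>R u) (v0 + t *\<^sub>R v)" by (simp only: R_lin) simp
      have "transpose Ks *v v0 + t *\<^sub>R (transpose Ks *v v) \<le> vec 1 + t *\<^sub>R 0" using in0 Kr t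
        by (intro vle_comb) (auto simp: F1_iff)
      hence r2: "transpose Ks *v (v0 + t *\<^sub>R v) \<le> vec 1" by (simp add: mv_add mv_scale del: transpose_matrix_vector)
      have "(y0 + t *\<^sub>R y, u0 + t *\<^sub>R u, v0 + t *\<^sub>R v) \<in> F1" using r1 r2 in0 h(3,4,5) t
        by (auto simp: F1_iff intro: vnn_comb)
      hence "c \<le> f1 (y0 + t *\<^sub>R y, u0 + t *\<^sub>R u, v0 + t *\<^sub>R v)" using h(7) by blast
      also have "\<dots> = f1 (y0, u0, v0) + t * f1 (y, u, v)" by (simp add: f1_add f1_scale)
      finally show "- f1 (y0, u0, v0) + t * (- f1 (y, u, v)) \<le> - c" by simp
    qed
    hence "- f1 (y, u, v) \<le> 0" by (rule ray_le_real)
    thus ?thesis using True by simp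
  qed
  have bndP: "fP q \<le> V" if h: "\<forall>z\<in>F2'. f2' z \<le> V" "\<forall>s\<in>F1. c \<le> f1 s" "V \<le> c" "q \<in> FP" for V c q
  proof -
    obtain a g w y u v where q: "q = (a, g, w, y, u, v)" by (cases q) auto
    have m: "w *\<^sub>R b \<le> ?R y u v" "?L a g \<le> (w + 1) *\<^sub>R cy" "transpose Ks *v v \<le> w *\<^sub>R vec 1"
      "0 \<le> a" "0 \<le> g" "0 \<le> u" "0 \<le> w" "0 \<le> y" "0 \<le> v" using h(4) q FP_iff by auto
    have "f2' (a, g) \<le> (w + 1) * V" using sc2 m h(1) by blast
    moreover have "w * c \<le> f1 (y, u, v)" using sc1 m h(2) by blast
    moreover have "w * V \<le> w * c" using m(7) h(3) by (simp add: mult_left_mono)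
    moreover have "(w + 1) * V = w * V + V" by (simp add: algebra_simps)
    ultimately show ?thesis using q fP_eq by simp
  qed
  have P1: "lp_max_unbounded F2' f2' \<longrightarrow> lp_max_unbounded F2 f2"
  proof
    assume u: "lp_max_unbounded F2' f2'"
    obtain a0 b0 where "(a0, b0) \<in> F2'" using feas2' by auto
    hence ne: "F2 \<noteq> {}" using emb by blast
    show "lp_max_unbounded F2 f2" unfolding lp_max_unbounded_def
    proof (intro conjI allI ne)
      fix M
      obtain z where z: "z \<in> F2'" "f2' z > M" using u unfolding lp_max_unbounded_def by blast
      obtain a g where "z = (a, g)" by (cases z) auto
      thus "\<exists>z\<in>F2. f2 z > M" using z emb f2_0 by (intro bexI[of _ "(a, g, 0)"]) auto
    qed
  qed
  have P2: "\<forall>\<psi> uy. lp_max_ray F2' f2' (\<psi>, uy) \<longrightarrow> lp_max_ray F2 f2 (\<psi>, uy, 0)"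
  proof (intro allI impI)
    fix \<psi> uy assume ray: "lp_max_ray F2' f2' (\<psi>, uy)"
    hence cl: "\<forall>z\<in>F2'. \<forall>t::real. t \<ge> 0 \<longrightarrow> z + t *\<^sub>R (\<psi>, uy) \<in> F2'" and pos: "f2' (\<psi>, uy) > 0"
      by (auto simp: lp_max_ray_def)
    obtain a0 b0 where ab0: "(a0, b0) \<in> F2'" using feas2' by auto
    have clt: "(a0 + t *\<^sub>R \<psi>, b0 + t *\<^sub>R uy) \<in> F2'" if "t \<ge> 0" for t
      using cl ab0 that by fastforce
    have "\<forall>t\<ge>0. ?L a0 b0 + t *\<^sub>R ?L \<psi> uy \<le> cy" using clt by (simp only: L_lin[symmetric] F2'_iff) blast
    hence Lr: "?L \<psi> uy \<le> 0" by (rule ray_le_vec)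
    have "\<forall>t\<ge>0. 0 \<le> a0 + t *\<^sub>R \<psi>" using clt F2'_iff by blast
    hence p1: "0 \<le> \<psi>" by (rule ray_ge_vec)
    have "\<forall>t\<ge>0. 0 \<le> b0 + t *\<^sub>R uy" using clt F2'_iff by blast
    hence p2: "0 \<le> uy" by (rule ray_ge_vec)
    show "lp_max_ray F2 f2 (\<psi>, uy, 0)" unfolding lp_max_ray_def
    proof (intro conjI ballI allI impI)
      show "F2 \<noteq> {}" using emb ab0 by blast
      show "f2 (\<psi>, uy, 0) > 0" using pos f2_0 by simp
      fix z and t :: real assume z: "z \<in> F2" and t: "t \<ge> 0"
      obtain a g w where ze: "z = (a, g, w)" by (cases z) auto
      have m: "?L a g \<le> (w + 1) *\<^sub>R cy" "0 \<le> a" "0 \<le> g" "0 \<le> w" "Oc = \<infinity> \<longrightarrow> w = 0"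
        using z ze F2_iff by auto
      have "?L a g + t *\<^sub>R ?L \<psi> uy \<le> (w + 1) *\<^sub>R cy + t *\<^sub>R 0" using m(1) Lr t by (rule vle_comb)
      hence "?L (a + t *\<^sub>R \<psi>) (g + t *\<^sub>R uy) \<le> (w + 1) *\<^sub>R cy" by (simp only: L_lin) simp
      thus "z + t *\<^sub>R (\<psi>, uy, 0) \<in> F2" using ze m p1 p2 t by (simp add: F2_iff vnn_comb)
    qed
  qed
  have P3: "\<forall>\<psi> uy. lp_max_opt F2' f2' (\<psi>, uy) \<and> ereal (f2' (\<psi>, uy)) > Oc \<longrightarrow>
          lp_max_unbounded F2 f2 \<and> lp_max_ray F2 f2 (\<psi>, uy, 1)"
  proof (intro allI impI)
    fix \<psi> uy assume h: "lp_max_opt F2' f2' (\<psi>, uy) \<and> ereal (f2' (\<psi>, uy)) > Oc"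
    hence Oi: "Oc \<noteq> \<infinity>" by auto
    obtain c where c: "Oc = ereal c" using Oc_fin[OF nu_of[OF Oi]] by blast
    have gt: "f2' (\<psi>, uy) > c" using h c by simp
    have inF: "(\<psi>, uy) \<in> F2'" using h by (simp add: lp_max_opt_def)
    hence m0: "?L \<psi> uy \<le> cy" "0 \<le> \<psi>" "0 \<le> uy" using F2'_iff by auto
    have ray: "lp_max_ray F2 f2 (\<psi>, uy, 1)" unfolding lp_max_ray_def
    proof (intro conjI ballI allI impI)
      show "F2 \<noteq> {}" using emb inF by blast
      show "f2 (\<psi>, uy, 1) > 0" using gt Oi c by (simp add: f2_eq)
      fix z and t :: real assume z: "z \<in> F2" and t: "t \<ge> 0"
      obtain a g w where ze: "z = (a, g, w)" by (cases z) auto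
      have m: "?L a g \<le> (w + 1) *\<^sub>R cy" "0 \<le> a" "0 \<le> g" "0 \<le> w"
        using z ze F2_iff by auto
      have "?L a g + t *\<^sub>R ?L \<psi> uy \<le> (w + 1) *\<^sub>R cy + t *\<^sub>R cy" using m(1) m0(1) t by (rule vle_comb)
      hence "?L (a + t *\<^sub>R \<psi>) (g + t *\<^sub>R uy) \<le> (w + t + 1) *\<^sub>R cy" by (simp only: L_lin) (simp add: algebra_simps)
      thus "z + t *\<^sub>R (\<psi>, uy, 1) \<in> F2" using ze m m0 t Oi by (simp add: F2_iff vnn_comb)
    qed
    have lin: "f2 (z + t *\<^sub>R (\<psi>, uy, 1)) = f2 z + t * f2 (\<psi>, uy, 1)" for z t
    proof -
      obtain a g w where ze: "z = (a, g, w)" by (cases z) auto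
      show ?thesis using Oi c by (simp add: ze f2_eq f2'_add f2'_scale algebra_simps)
    qed
    show "lp_max_unbounded F2 f2 \<and> lp_max_ray F2 f2 (\<psi>, uy, 1)" using ray ray_unb[OF ray lin] by blast
  qed
  have P4: "\<forall>\<psi> uy. lp_max_opt F2' f2' (\<psi>, uy) \<and> ereal (f2' (\<psi>, uy)) \<le> Oc \<longrightarrow>
          lp_max_opt F2 f2 (\<psi>, uy, 0) \<and> f2 (\<psi>, uy, 0) = f2' (\<psi>, uy)"
  proof (intro allI impI conjI)
    fix \<psi> uy assume h: "lp_max_opt F2' f2' (\<psi>, uy) \<and> ereal (f2' (\<psi>, uy)) \<le> Oc"
    show "f2 (\<psi>, uy, 0) = f2' (\<psi>, uy)" by (rule f2_0)
    have inF: "(\<psi>, uy) \<in> F2'" and le: "\<forall>z\<in>F2'. f2' z \<le> f2' (\<psi>, uy)" using h by (auto simp: lp_max_opt_def)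
    show "lp_max_opt F2 f2 (\<psi>, uy, 0)" unfolding lp_max_opt_def
    proof (intro conjI ballI)
      show "(\<psi>, uy, 0) \<in> F2" using emb inF by blast
      fix z assume z: "z \<in> F2"
      obtain a g w where ze: "z = (a, g, w)" by (cases z) auto
      have m: "?L a g \<le> (w + 1) *\<^sub>R cy" "0 \<le> a" "0 \<le> g" "0 \<le> w" "Oc = \<infinity> \<longrightarrow> w = 0"
        using z ze F2_iff by auto
      show "f2 z \<le> f2 (\<psi>, uy, 0)"
      proof (cases "Oc = \<infinity>")
        case True
        hence "(a, g) \<in> F2'" using m by (simp add: F2'_iff)
        thus ?thesis using le ze m True by (simp add: f2_eq)
      next
        case False
        obtain c where c: "Oc = ereal c" using Oc_fin[OF nu_of[OF False]] by blast
        let ?V = "f2' (\<psi>, uy)"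
        have Vc: "?V \<le> c" using h c by simp
        have "f2' (a, g) \<le> (w + 1) * ?V" using sc2 m le by blast
        moreover have "w * ?V \<le> w * c" using m(4) Vc by (simp add: mult_left_mono)
        moreover have "(w + 1) * ?V = w * ?V + ?V" by (simp add: algebra_simps)
        ultimately show ?thesis using ze False c by (simp add: f2_eq f2_0 mult.commute)
      qed
    qed
  qed
  have key: "lp_max_unbounded FP fP" if "z \<in> F2'" "s \<in> F1" "f1 s < f2' z" for z s
  proof -
    obtain a g where ze: "z = (a, g)" by (cases z) auto
    obtain y u v where se: "s = (y, u, v)" by (cases s) auto
    define \<delta> where "\<delta> = f2' (a, g) - f1 (y, u, v)"
    have dp: "\<delta> > 0" using that ze se by (simp add: \<delta>_def)
    have mz: "?L a g \<le> cy" "0 \<le> a" "0 \<le> g" using that(1) ze F2'_iff by auto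
    have ms: "b \<le> ?R y u v" "transpose Ks *v v \<le> vec 1" "0 \<le> y" "0 \<le> u" "0 \<le> v"
      using that(2) se F1_iff by auto
    have pt: "((t + 1) *\<^sub>R a, (t + 1) *\<^sub>R g, t, t *\<^sub>R y, t *\<^sub>R u, t *\<^sub>R v) \<in> FP \<and>
        fP ((t + 1) *\<^sub>R a, (t + 1) *\<^sub>R g, t, t *\<^sub>R y, t *\<^sub>R u, t *\<^sub>R v) = f2' (a, g) + t * \<delta>"
      if t: "t \<ge> 0" for t
    proof
      have t1: "t + 1 \<ge> 0" using t by simp
      have "t *\<^sub>R b \<le> t *\<^sub>R ?R y u v" using ms(1) t by (rule vle_scale)
      hence r1: "t *\<^sub>R b \<le> ?R (t *\<^sub>R y) (t *\<^sub>R u) (t *\<^sub>R v)" by (simp only: R_scale)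
      have "(t + 1) *\<^sub>R ?L a g \<le> (t + 1) *\<^sub>R cy" using mz(1) t1 by (rule vle_scale)
      hence r2: "?L ((t + 1) *\<^sub>R a) ((t + 1) *\<^sub>R g) \<le> (t + 1) *\<^sub>R cy" by (simp only: L_scale)
      have "t *\<^sub>R (transpose Ks *v v) \<le> t *\<^sub>R vec 1" using ms(2) t by (rule vle_scale)
      hence r3: "transpose Ks *v (t *\<^sub>R v) \<le> t *\<^sub>R vec 1" by (simp add: mv_scale del: transpose_matrix_vector)
      show "((t + 1) *\<^sub>R a, (t + 1) *\<^sub>R g, t, t *\<^sub>R y, t *\<^sub>R u, t *\<^sub>R v) \<in> FP"
        using r1 r2 r3 mz ms t t1 by (simp add: FP_iff vnn_scale)
      show "fP ((t + 1) *\<^sub>R a, (t + 1) *\<^sub>R g, t, t *\<^sub>R y, t *\<^sub>R u, t *\<^sub>R v) = f2' (a, g) + t * \<delta>"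
        by (simp only: fP_eq f2'_scale f1_scale) (simp add: \<delta>_def algebra_simps)
    qed
    show ?thesis unfolding lp_max_unbounded_def
    proof (intro conjI allI)
      show "FP \<noteq> {}" using pt[of 0] by auto
      fix M
      define t where "t = (\<bar>M - f2' (a, g)\<bar> + 1) / \<delta>"
      have t0: "t \<ge> 0" using dp by (simp add: t_def)
      have "t * \<delta> = \<bar>M - f2' (a, g)\<bar> + 1" using dp by (simp add: t_def)
      thus "\<exists>z\<in>FP. fP z > M" using pt[OF t0] by (intro bexI[of _ "((t + 1) *\<^sub>R a, (t + 1) *\<^sub>R g, t, t *\<^sub>R y, t *\<^sub>R u, t *\<^sub>R v)"]) auto
    qed
  qed
  have P5: "lp_max_unbounded FP fP \<longleftrightarrow>
          lp_min_unbounded F1 f1 \<or> lp_max_unbounded F2' f2' \<or> lp_max_value F2' f2' > Oc"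
  proof
    assume uP: "lp_max_unbounded FP fP"
    show "lp_min_unbounded F1 f1 \<or> lp_max_unbounded F2' f2' \<or> lp_max_value F2' f2' > Oc"
    proof (rule ccontr)
      assume "\<not> ?thesis"
      hence nu: "\<not> lp_min_unbounded F1 f1" and vle: "lp_max_value F2' f2' \<le> Oc" by auto
      obtain c where c: "Oc = ereal c" "\<forall>s\<in>F1. c \<le> f1 s" using Oc_fin[OF nu] by blast
      have "\<forall>z\<in>F2'. f2' z \<le> c" using vle c unfolding lp_max_value_def by (simp add: SUP_le_iff)
      hence "\<forall>q\<in>FP. fP q \<le> c" using bndP c(2) by blast
      moreover obtain q where "q \<in> FP" "fP q > c" using uP unfolding lp_max_unbounded_def by blast
      ultimately show False by fastforce
    qed
  next
    assume "lp_min_unbounded F1 f1 \<or> lp_max_unbounded F2' f2' \<or> lp_max_value F2' f2' > Oc"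
    moreover
    { assume un: "lp_min_unbounded F1 f1"
      obtain z where z: "z \<in> F2'" using feas2' by blast
      obtain s where "s \<in> F1" "f1 s < f2' z" using un unfolding lp_min_unbounded_def by blast
      hence "lp_max_unbounded FP fP" using key z by blast }
    moreover
    { assume vg: "lp_max_value F2' f2' > Oc"
      hence Oi: "Oc \<noteq> \<infinity>" by auto
      obtain c where c: "Oc = ereal c" "\<forall>e>c. \<exists>s\<in>F1. f1 s < e" using Oc_fin[OF nu_of[OF Oi]] by blast
      obtain z where z: "z \<in> F2'" "ereal c < ereal (f2' z)" using vg c unfolding lp_max_value_def
        by (auto simp: less_SUP_iff)
      then obtain s where "s \<in> F1" "f1 s < f2' z" using c(2) by auto
      hence "lp_max_unbounded FP fP" using key z by blast }
    moreover
    { assume u2: "lp_max_unbounded F2' f2'"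
      have "lp_max_unbounded FP fP" unfolding lp_max_unbounded_def
      proof (intro conjI allI)
        have inP: "(a, g, 0, 0, 0, 0) \<in> FP" if "(a, g) \<in> F2'" for a g
          using that by (simp add: FP_iff F2'_iff)
        obtain a0 b0 where "(a0, b0) \<in> F2'" using feas2' by auto
        thus "FP \<noteq> {}" using inP by blast
        fix M
        obtain z where z: "z \<in> F2'" "f2' z > M" using u2 unfolding lp_max_unbounded_def by blast
        obtain a g where ze: "z = (a, g)" by (cases z) auto
        show "\<exists>z\<in>FP. fP z > M" using z ze inP f1_0 fP_eq by (intro bexI[of _ "(a, g, 0, 0, 0, 0)"]) auto
      qed }
    ultimately show "lp_max_unbounded FP fP" by blast
  qed
  have P6: "\<forall>\<psi> uy. \<not> lp_min_unbounded F1 f1 \<and> lp_max_opt F2' f2' (\<psi>, uy)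
            \<and> ereal (f2' (\<psi>, uy)) \<le> Oc \<longrightarrow>
          lp_max_opt FP fP (\<psi>, uy, 0, 0, 0, 0) \<and> fP (\<psi>, uy, 0, 0, 0, 0) = f2' (\<psi>, uy)
          \<and> lp_max_value FP fP = lp_max_value F2' f2'"
  proof (intro allI impI)
    fix \<psi> uy assume h: "\<not> lp_min_unbounded F1 f1 \<and> lp_max_opt F2' f2' (\<psi>, uy) \<and> ereal (f2' (\<psi>, uy)) \<le> Oc"
    obtain c where c: "Oc = ereal c" "\<forall>s\<in>F1. c \<le> f1 s" using Oc_fin h by blast
    have inF: "(\<psi>, uy) \<in> F2'" and le: "\<forall>z\<in>F2'. f2' z \<le> f2' (\<psi>, uy)" using h by (auto simp: lp_max_opt_def)
    have Vc: "f2' (\<psi>, uy) \<le> c" using h c by simp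
    have val: "fP (\<psi>, uy, 0, 0, 0, 0) = f2' (\<psi>, uy)" using fP_eq f1_0 by simp
    have inP: "(\<psi>, uy, 0, 0, 0, 0) \<in> FP" using inF by (simp add: FP_iff F2'_iff)
    have opt: "lp_max_opt FP fP (\<psi>, uy, 0, 0, 0, 0)" unfolding lp_max_opt_def
      using inP bndP[OF le c(2) Vc] val by simp
    show "lp_max_opt FP fP (\<psi>, uy, 0, 0, 0, 0) \<and> fP (\<psi>, uy, 0, 0, 0, 0) = f2' (\<psi>, uy)
          \<and> lp_max_value FP fP = lp_max_value F2' f2'"
      using opt val opt_value[OF opt] opt_value[of F2' f2' "(\<psi>, uy)"] h by simp
  qed
  show ?thesis using P1 P2 P3 P4 P5 P6 by blast
qed

end
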